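(* Let $P(\lambda)=\begin{bmatrix} A(\lambda) & B(\lambda)\\ -C(\lambda) & D(\lambda)\end{bmatrix}$ be a polynomial system matrix of a rational matrix $G(\lambda)\in\mathbb F(\lambda)^{p\times m}$, with $A(\lambda)\in\mathbb F[\lambda]^{n\times n}$. (a) If $A(\lambda)$ and $C(\lambda)$ are right coprime, $A(\lambda)^{-1}B(\lambda)$ is proper and $\begin{bmatrix} H_1(\lambda)\\ H_2(\lambda)\end{bmatrix}\in\mathbb F[\lambda]^{(n+m)\times l}$ is a right minimal basis of $P(\lambda)$, then $H_2(\lambda)$ is a right minimal basis of $G(\lambda)$ and $H_1(\lambda)=-A(\lambda)^{-1}B(\lambda)H_2(\lambda)$. Moreover, the right minimal indices of $P(\lambda)$ and $G(\lambda)$ are the same. (b) If $A(\lambda)$ and $B(\lambda)$ are left coprime, $C(\lambda)A(\lambda)^{-1}$ is proper and $\begin{bmatrix} H_1(\lambda)\\ H_2(\lambda)\end{bmatrix}\in\mathbb F[\lambda]^{(n+p)\times q}$ is a left minimal basis of $P(\lambda)$, then $H_2(\lambda)$ is a left minimal basis of $G(\lambda)$ and $H_1(\lambda)=(C(\lambda)A(\lambda)^{-1})^TH_2(\lambda)$. Moreover, the left minimal indices of $P(\lambda)$ and $G(\lambda)$ are the same.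
   Context: $\mathbb F$ is an arbitrary field, $\overline{\mathbb F}$ its algebraic closure. A polynomial system matrix of $G(\lambda)\in\mathbb F(\lambda)^{p\times m}$ is a polynomial matrix $P(\lambda)=\begin{bmatrix} A(\lambda) & B(\lambda)\\ -C(\lambda) & D(\lambda)\end{bmatrix}$ with $A(\lambda)\in\mathbb F[\lambda]^{n\times n}$ regular, $B\in\mathbb F[\lambda]^{n\times m}$, $C\in\mathbb F[\lambda]^{p\times n}$, $D\in\mathbb F[\lambda]^{p\times m}$, and $G=D+CA^{-1}B$. Polynomial matrices $A\in\mathbb F[\lambda]^{n\times n}$, $C\in\mathbb F[\lambda]^{p\times n}$ are right coprime if every common right divisor is unimodular (equivalently $\begin{bmatrix}A(\lambda_0)\\ C(\lambda_0)\end{bmatrix}$ has full column rank for all $\lambda_0\in\overline{\mathbb F}$); $A,B$ are left coprime if $A^T,B^T$ are right coprime. A rational matrix is proper if every entry has numerator degree at most denominator degree. For a subspace $\mathcal V\subseteq\mathbb F(\lambda)^k$, the order of a polynomial basis is the sum of the degrees of its vectors; a minimal basis is a polynomial basis of least order; the minimal indices of $\mathcal V$ are the degrees of the vectors of a minimal basis (well defined). A polynomial matrix is a right (resp. left) minimal basis of a rational matrix $G$ if its columns form a minimal basis of $\mathcal N_r(G)=\{x: Gx=0\}$ (resp. $\mathcal N_\ell(G)=\{x: x^TG=0\}$); the right (left) minimal indices of $G$ are the minimal indices of $\mathcal N_r(G)$ ($\mathcal N_\ell(G)$). *)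

theory Defs
  imports "HOL-Computational_Algebra.Polynomial" "HOL-Computational_Algebra.Fraction_Field"
    "HOL-Library.Multiset" "Jordan_Normal_Form.Determinant"
begin

type_synonym 'a ratf = "'a poly fract"

definition to_ratf :: "'a::field poly \<Rightarrow> 'a ratf" where
  "to_ratf p = Fract p 1"

definition ratmat :: "'a::field poly mat \<Rightarrow> 'a ratf mat" where
  "ratmat M = map_mat to_ratf M"

definition unimodular :: "'a::field poly mat \<Rightarrow> bool" where
  "unimodular U \<longleftrightarrow> square_mat U \<and> is_unit (det U)"

definition right_coprime :: "'a::field poly mat \<Rightarrow> 'a poly mat \<Rightarrow> bool" where
  "right_coprime A C \<longleftrightarrow>
     (\<forall>R X Y. R \<in> carrier_mat (dim_col A) (dim_col A) \<and>
              X \<in> carrier_mat (dim_row A) (dim_col A) \<and>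
              Y \<in> carrier_mat (dim_row C) (dim_col A) \<and>
              A = X * R \<and> C = Y * R \<longrightarrow> unimodular R)"

definition left_coprime :: "'a::field poly mat \<Rightarrow> 'a poly mat \<Rightarrow> bool" where
  "left_coprime A B \<longleftrightarrow> right_coprime (transpose_mat A) (transpose_mat B)"

definition proper_ratf :: "'a::field ratf \<Rightarrow> bool" where
  "proper_ratf r \<longleftrightarrow> (\<exists>a b. b \<noteq> 0 \<and> r = Fract a b \<and> degree a \<le> degree b)"

definition proper_mat :: "'a::field ratf mat \<Rightarrow> bool" where
  "proper_mat M \<longleftrightarrow> (\<forall>i < dim_row M. \<forall>j < dim_col M. proper_ratf (M $$ (i, j)))"

definition mat_inv :: "'a::field ratf mat \<Rightarrow> 'a ratf mat" where
  "mat_inv M = (SOME X. X \<in> carrier_mat (dim_row M) (dim_row M) \<and> inverts_mat M X \<and> inverts_mat X M)"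

definition system_matrix :: "'a::field poly mat \<Rightarrow> 'a poly mat \<Rightarrow> 'a poly mat \<Rightarrow> 'a poly mat \<Rightarrow> 'a poly mat" where
  "system_matrix A B C D = four_block_mat A B (- C) D"

definition is_polynomial_system_matrix ::
  "nat \<Rightarrow> nat \<Rightarrow> nat \<Rightarrow> 'a::field poly mat \<Rightarrow> 'a poly mat \<Rightarrow> 'a poly mat \<Rightarrow> 'a poly mat \<Rightarrow> 'a ratf mat \<Rightarrow> bool" where
  "is_polynomial_system_matrix n m p A B C D G \<longleftrightarrow>
     A \<in> carrier_mat n n \<and> B \<in> carrier_mat n m \<and> C \<in> carrier_mat p n \<and> D \<in> carrier_mat p m \<and>
     det A \<noteq> 0 \<and> G \<in> carrier_mat p m \<and>
     G = ratmat D + ratmat C * mat_inv (ratmat A) * ratmat B"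

definition right_null :: "'a::field ratf mat \<Rightarrow> 'a ratf vec set" where
  "right_null M = {x \<in> carrier_vec (dim_col M). M *\<^sub>v x = 0\<^sub>v (dim_row M)}"

definition left_null :: "'a::field ratf mat \<Rightarrow> 'a ratf vec set" where
  "left_null M = {x \<in> carrier_vec (dim_row M). transpose_mat M *\<^sub>v x = 0\<^sub>v (dim_col M)}"

definition vdegree :: "'a::zero poly vec \<Rightarrow> nat" where
  "vdegree v = Max (insert 0 {degree (v $ i) | i. i < dim_vec v})"

definition col_degrees :: "'a::zero poly mat \<Rightarrow> nat multiset" where
  "col_degrees H = mset (map vdegree (cols H))"

definition order :: "'a::zero poly mat \<Rightarrow> nat" where
  "order H = sum_list (map vdegree (cols H))"

definition poly_basis :: "nat \<Rightarrow> 'a::field ratf vec set \<Rightarrow> 'a poly mat \<Rightarrow> bool" where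
  "poly_basis k V H \<longleftrightarrow> dim_row H = k \<and>
     (\<forall>c \<in> carrier_vec (dim_col H). ratmat H *\<^sub>v c = 0\<^sub>v k \<longrightarrow> c = 0\<^sub>v (dim_col H)) \<and>
     V = {ratmat H *\<^sub>v c | c. c \<in> carrier_vec (dim_col H)}"

definition minimal_basis :: "nat \<Rightarrow> 'a::field ratf vec set \<Rightarrow> 'a poly mat \<Rightarrow> bool" where
  "minimal_basis k V H \<longleftrightarrow> poly_basis k V H \<and> (\<forall>H'. poly_basis k V H' \<longrightarrow> order H \<le> order H')"

definition minimal_indices :: "nat \<Rightarrow> 'a::field ratf vec set \<Rightarrow> nat multiset" where
  "minimal_indices k V = (THE M. \<exists>H. minimal_basis k V H \<and> col_degrees H = M)"

definition right_minimal_basis :: "'a::field ratf mat \<Rightarrow> 'a poly mat \<Rightarrow> bool" where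
  "right_minimal_basis G H \<longleftrightarrow> minimal_basis (dim_col G) (right_null G) H"

definition left_minimal_basis :: "'a::field ratf mat \<Rightarrow> 'a poly mat \<Rightarrow> bool" where
  "left_minimal_basis G H \<longleftrightarrow> minimal_basis (dim_row G) (left_null G) H"

definition right_minimal_indices :: "'a::field ratf mat \<Rightarrow> nat multiset" where
  "right_minimal_indices G = minimal_indices (dim_col G) (right_null G)"

definition left_minimal_indices :: "'a::field ratf mat \<Rightarrow> nat multiset" where
  "left_minimal_indices G = minimal_indices (dim_row G) (left_null G)"

end

theory Submission
  imports Defs
begin


interpretation tr: inj_idom_hom "to_ratf :: 'a::field poly \<Rightarrow> 'a ratf"
proof unfold_locales
  fix x y :: "'a poly"
  show "to_ratf (x + y) = to_ratf x + to_ratf y" by (simp add: to_ratf_def)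
  show "to_ratf (x * y) = to_ratf x * to_ratf y" by (simp add: to_ratf_def)
  show "to_ratf 1 = 1" by (simp add: to_ratf_def fract_collapse)
  show "to_ratf 0 = 0" by (simp add: to_ratf_def fract_collapse)
  show "to_ratf x = 0 \<Longrightarrow> x = 0" by (simp add: to_ratf_def Zero_fract_def eq_fract)
qed

section \<open>Degree bounds for rational functions\<close>

definition dle :: "'a::field ratf \<Rightarrow> nat \<Rightarrow> bool" where
  "dle x k \<longleftrightarrow> (\<exists>a b. b \<noteq> 0 \<and> x = Fract a b \<and> degree a \<le> degree b + k)"

lemma dle_poly: "degree q \<le> k \<Longrightarrow> dle (to_ratf q) k"
  unfolding dle_def to_ratf_def by (rule exI[of _ q], rule exI[of _ 1], auto)

lemma dle_zero: "dle 0 k"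
  unfolding dle_def by (rule exI[of _ 0], rule exI[of _ 1], auto simp: Zero_fract_def)

lemma dle_mult: assumes "dle x 0" "dle y k" shows "dle (x * y) k"
proof -
  from assms obtain a b c d where b: "b \<noteq> 0" "x = Fract a b" "degree a \<le> degree b"
    and d: "d \<noteq> 0" "y = Fract c d" "degree c \<le> degree d + k" unfolding dle_def by auto
  have "degree (a * c) \<le> degree a + degree c" by (rule degree_mult_le)
  also have "\<dots> \<le> degree (b * d) + k" using b d by (simp add: degree_mult_eq)
  finally show ?thesis unfolding dle_def using b d by (intro exI[of _ "a*c"] exI[of _ "b*d"], auto)
qed

lemma dle_add: assumes "dle x k" "dle y k" shows "dle (x + y) k"
proof -
  from assms obtain a b c d where b: "b \<noteq> 0" "x = Fract a b" "degree a \<le> degree b + k"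
    and d: "d \<noteq> 0" "y = Fract c d" "degree c \<le> degree d + k" unfolding dle_def by auto
  have "degree (a * d + c * b) \<le> degree (b * d) + k"
  proof (rule degree_add_le)
    show "degree (a * d) \<le> degree (b * d) + k" using b d degree_mult_le[of a d] by (simp add: degree_mult_eq)
    show "degree (c * b) \<le> degree (b * d) + k" using b d degree_mult_le[of c b] by (simp add: degree_mult_eq)
  qed
  thus ?thesis unfolding dle_def using b d by (intro exI[of _ "a*d+c*b"] exI[of _ "b*d"], auto)
qed

lemma dle_sum: "(\<And>i. i \<in> S \<Longrightarrow> dle (f i) k) \<Longrightarrow> dle (sum f S) k"
proof (induct S rule: infinite_finite_induct)
  case (infinite A) then show ?case by (simp add: dle_zero)
next
  case empty then show ?case by (simp add: dle_zero)
next
  case (insert x F) then show ?case by (simp add: dle_add)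
qed

lemma dle_uminus: assumes "dle x k" shows "dle (- x) k"
proof -
  from assms obtain a b where "b \<noteq> 0" "x = Fract a b" "degree a \<le> degree b + k" unfolding dle_def by auto
  thus ?thesis unfolding dle_def by (intro exI[of _ "- a"] exI[of _ b], auto)
qed

lemma dle_poly_rev: assumes "dle (to_ratf q) k" shows "degree q \<le> k"
proof (cases "q = 0")
  case False
  from assms obtain a b where b: "b \<noteq> 0" "to_ratf q = Fract a b" "degree a \<le> degree b + k"
    unfolding dle_def by auto
  hence "q * b = a" by (simp add: to_ratf_def eq_fract)
  hence "degree a = degree q + degree b" using False b by (auto simp: degree_mult_eq)
  thus ?thesis using b by simp
qed auto

lemma proper_dle: "proper_ratf x \<Longrightarrow> dle x 0"
  unfolding proper_ratf_def dle_def by auto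

lemma proper_uminus: assumes "proper_ratf x" shows "proper_ratf (- x)"
proof -
  from assms obtain a b where "b \<noteq> 0" "x = Fract a b" "degree a \<le> degree b" unfolding proper_ratf_def by auto
  thus ?thesis unfolding proper_ratf_def by (intro exI[of _ "- a"] exI[of _ b], auto)
qed

lemma vdegree_le_iff: "vdegree v \<le> k \<longleftrightarrow> (\<forall>i < dim_vec v. degree (v $ i) \<le> k)"
proof -
  have fin: "finite {degree (v $ i) | i. i < dim_vec v}" by simp
  show ?thesis unfolding vdegree_def using fin by (auto simp: Max_le_iff)
qed

lemma degree_le_vdegree: "i < dim_vec v \<Longrightarrow> degree (v $ i) \<le> vdegree v"
  using vdegree_le_iff[of v "vdegree v"] by auto

section \<open>An irreducible factor with Bezout property\<close>

lemma bezout_min: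
  fixes \<pi> u :: "'a::field poly"
  assumes pi0: "\<pi> \<noteq> 0" and nd: "\<not> \<pi> dvd u"
    and minp: "\<And>g. g dvd \<pi> \<Longrightarrow> degree g > 0 \<Longrightarrow> degree \<pi> \<le> degree g"
  shows "\<exists>s t. s * u + t * \<pi> = 1"
proof -
  define S where "S = {s * u + t * \<pi> | s t. True}"
  have piS: "\<pi> \<in> S" unfolding S_def by (rule CollectI, rule exI[of _ 0], rule exI[of _ 1], simp)
  define k where "k = (LEAST k. \<exists>g \<in> S. g \<noteq> 0 \<and> degree g = k)"
  have "\<exists>g \<in> S. g \<noteq> 0 \<and> degree g = k" unfolding k_def
    by (rule LeastI[of _ "degree \<pi>"], use piS pi0 in auto)
  then obtain g where gS: "g \<in> S" and g0: "g \<noteq> 0" and gk: "degree g = k" by auto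
  have minS: "\<And>g'. g' \<in> S \<Longrightarrow> g' \<noteq> 0 \<Longrightarrow> k \<le> degree g'" unfolding k_def
    by (rule Least_le, auto)
  from gS obtain s0 t0 where g: "g = s0 * u + t0 * \<pi>" unfolding S_def by auto
  have dvdS: "g dvd x" if "x \<in> S" for x
  proof -
    from that obtain s t where x: "x = s * u + t * \<pi>" unfolding S_def by auto
    have "x mod g = x - (x div g) * g" by (simp add: minus_div_mult_eq_mod)
    also have "\<dots> = (s - (x div g) * s0) * u + (t - (x div g) * t0) * \<pi>" unfolding x g by (simp add: algebra_simps)
    finally have "x mod g \<in> S" unfolding S_def by auto
    moreover have "x mod g = 0 \<or> degree (x mod g) < degree g" by (rule degree_mod_less[OF g0])
    ultimately have "x mod g = 0" using minS gk by force
    thus ?thesis by (simp add: mod_eq_0_iff_dvd)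
  qed
  have uS: "u \<in> S" unfolding S_def by (rule CollectI, rule exI[of _ 1], rule exI[of _ 0], simp)
  have gu: "g dvd u" by (rule dvdS[OF uS])
  have gpi: "g dvd \<pi>" by (rule dvdS[OF piS])
  have "degree g = 0"
  proof (rule ccontr)
    assume "degree g \<noteq> 0"
    hence "degree \<pi> \<le> degree g" using minp[OF gpi] by auto
    moreover from gpi obtain q where q: "\<pi> = g * q" by (auto elim: dvdE)
    ultimately have "degree q = 0" using pi0 g0 by (auto simp: degree_mult_eq)
    hence "is_unit q" using q pi0 by (subst is_unit_iff_degree, auto)
    hence "\<pi> dvd g" using q by (metis dvd_mult_unit_iff dvd_refl)
    hence "\<pi> dvd u" using gu by (rule dvd_trans)
    thus False using nd by auto
  qed
  then obtain c where gc: "g = [:c:]" by (rule degree_eq_zeroE)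
  with g0 have c0: "c \<noteq> 0" by auto
  have "smult (inverse c) g = 1" using gc c0 by (simp add: one_pCons)
  hence "smult (inverse c) s0 * u + smult (inverse c) t0 * \<pi> = 1" unfolding g by (simp add: algebra_simps smult_add_right)
  thus ?thesis by blast
qed

lemma irred_factor:
  fixes d :: "'a::field poly"
  assumes d0: "d \<noteq> 0" and dd: "degree d > 0"
  shows "\<exists>\<pi>. \<pi> dvd d \<and> degree \<pi> > 0 \<and> (\<forall>u. \<not> \<pi> dvd u \<longrightarrow> (\<exists>s t. s * u + t * \<pi> = 1))"
proof -
  define k where "k = (LEAST k. \<exists>g. g dvd d \<and> degree g > 0 \<and> degree g = k)"
  have "\<exists>g. g dvd d \<and> degree g > 0 \<and> degree g = k" unfolding k_def
    by (rule LeastI[of _ "degree d"], rule exI[of _ d], use dd in simp)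
  then obtain p where p: "p dvd d" "degree p > 0" "degree p = k" by auto
  have minp: "degree p \<le> degree g" if "g dvd p" "degree g > 0" for g
  proof -
    have "g dvd d" using that(1) p(1) by (rule dvd_trans)
    thus ?thesis unfolding p(3) k_def using that by (intro Least_le, auto)
  qed
  have p0: "p \<noteq> 0" using p by auto
  show ?thesis using bezout_min[OF p0 _ minp] p by blast
qed



definition Rm :: "nat \<Rightarrow> nat \<Rightarrow> 'a::comm_ring_1 vec \<Rightarrow> 'a \<Rightarrow> 'a mat" where
  "Rm n i0 w p = mat n n (\<lambda>(r,c). if c = i0 then (if r = i0 then p else - w $ r) else (if r = c then 1 else 0))"

lemma Rm_carrier: "Rm n i0 w p \<in> carrier_mat n n" unfolding Rm_def by auto

lemma det_Rm: assumes i0: "i0 < n" shows "det (Rm n i0 w p) = p"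
proof -
  let ?R = "Rm n i0 w p"
  have "det ?R = (\<Sum>j<n. ?R $$ (i0,j) * cofactor ?R i0 j)"
    by (rule laplace_expansion_row[OF Rm_carrier i0])
  also have "\<dots> = (\<Sum>j<n. if j = i0 then p * cofactor ?R i0 i0 else 0)"
    by (rule sum.cong, use i0 in \<open>auto simp: Rm_def\<close>)
  also have "\<dots> = p * cofactor ?R i0 i0" using i0 by simp
  also have "mat_delete ?R i0 i0 = 1\<^sub>m (n - 1)"
    by (rule eq_matI, auto simp: mat_delete_def Rm_def)
  hence "cofactor ?R i0 i0 = 1" unfolding cofactor_def by simp
  finally show ?thesis by simp
qed

lemma factor_Rm:
  fixes M :: "'a::field poly mat"
  assumes M: "M \<in> carrier_mat k n" and i0: "i0 < n" and w: "w \<in> carrier_vec n" and w1: "w $ i0 = 1"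
    and p0: "p \<noteq> 0" and dv: "\<And>r. r < k \<Longrightarrow> p dvd (M *\<^sub>v w) $ r"
  shows "\<exists>X \<in> carrier_mat k n. M = X * Rm n i0 w p"
proof -
  define X where "X = mat k n (\<lambda>(r,c). if c = i0 then (M *\<^sub>v w) $ r div p else M $$ (r,c))"
  have X: "X \<in> carrier_mat k n" unfolding X_def by auto
  have "M = X * Rm n i0 w p"
  proof (rule eq_matI)
    fix r c assume r: "r < dim_row (X * Rm n i0 w p)" and c: "c < dim_col (X * Rm n i0 w p)"
    hence r: "r < k" and c: "c < n" using X by (auto simp: Rm_def)
    have prod: "(X * Rm n i0 w p) $$ (r,c) = (\<Sum>j<n. X $$ (r,j) * Rm n i0 w p $$ (j,c))"
      using r c X by (simp add: scalar_prod_def Rm_def lessThan_atLeast0)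
    show "M $$ (r,c) = (X * Rm n i0 w p) $$ (r,c)"
    proof (cases "c = i0")
      case False
      have "(\<Sum>j<n. X $$ (r,j) * Rm n i0 w p $$ (j,c)) = (\<Sum>j<n. if j = c then X $$ (r,c) else 0)"
        by (rule sum.cong, use False c in \<open>auto simp: Rm_def\<close>)
      also have "\<dots> = M $$ (r,c)" using c r False by (simp add: X_def)
      finally show ?thesis using prod by simp
    next
      case True
      have Mw: "(M *\<^sub>v w) $ r = (\<Sum>j<n. M $$ (r,j) * w $ j)"
        using M w r by (simp add: scalar_prod_def lessThan_atLeast0)
      have fin: "finite {..<n}" by simp
      have i0in: "i0 \<in> {..<n}" using i0 by simp
      have "(\<Sum>j<n. X $$ (r,j) * Rm n i0 w p $$ (j,c))
         = X $$ (r,i0) * p + (\<Sum>j\<in>{..<n} - {i0}. X $$ (r,j) * Rm n i0 w p $$ (j,c))"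
        using sum.remove[OF fin i0in, of "\<lambda>j. X $$ (r,j) * Rm n i0 w p $$ (j,c)"] True i0 by (simp add: Rm_def)
      also have "X $$ (r,i0) * p = (M *\<^sub>v w) $ r"
      proof -
        have "X $$ (r,i0) = (M *\<^sub>v w) $ r div p" using r i0 by (simp add: X_def)
        thus ?thesis using dvd_div_mult_self[OF dv[OF r]] by simp
      qed
      also have "(\<Sum>j\<in>{..<n} - {i0}. X $$ (r,j) * Rm n i0 w p $$ (j,c)) = (\<Sum>j\<in>{..<n} - {i0}. - (M $$ (r,j) * w $ j))"
        by (rule sum.cong, use True r i0 in \<open>auto simp: Rm_def X_def\<close>)
      also have "(M *\<^sub>v w) $ r = M $$ (r,i0) + (\<Sum>j\<in>{..<n} - {i0}. M $$ (r,j) * w $ j)"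
        unfolding Mw using sum.remove[OF fin i0in, of "\<lambda>j. M $$ (r,j) * w $ j"] w1 by simp
      finally show ?thesis using prod True by (simp add: sum_negf)
    qed
  qed (use X M in \<open>auto simp: Rm_def\<close>)
  with X show ?thesis by blast
qed



lemma ratmat_index[simp]: "i < dim_row M \<Longrightarrow> j < dim_col M \<Longrightarrow> ratmat M $$ (i,j) = to_ratf (M $$ (i,j))"
  unfolding ratmat_def by simp
lemma ratmat_dims[simp]: "dim_row (ratmat M) = dim_row M" "dim_col (ratmat M) = dim_col M"
  unfolding ratmat_def by auto
lemma ratmat_carrier[simp]: "ratmat M \<in> carrier_mat a b \<longleftrightarrow> M \<in> carrier_mat a b"
  unfolding carrier_mat_def by simp

lemma ratmat_mult_vec_index:
  assumes M: "M \<in> carrier_mat k n" and h: "h \<in> carrier_vec n" and r: "r < k"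
  shows "(ratmat M *\<^sub>v h) $ r = (\<Sum>j<n. to_ratf (M $$ (r,j)) * h $ j)"
  using M h r by (simp add: scalar_prod_def lessThan_atLeast0)

lemma dvd_Mw:
  fixes M :: "'a::field poly mat"
  assumes M: "M \<in> carrier_mat k n" and h: "h \<in> carrier_vec n" and r: "r < k" and i0: "i0 < n"
    and pd: "\<pi> dvd d" and u: "\<And>j. j < n \<Longrightarrow> to_ratf (u j) = to_ratf d * h $ j"
    and hM: "(ratmat M *\<^sub>v h) $ r \<in> range to_ratf"
  shows "\<pi> dvd (M *\<^sub>v vec n (\<lambda>i. s * u i + (if i = i0 then t * \<pi> else 0))) $ r"
proof -
  obtain q where q: "(ratmat M *\<^sub>v h) $ r = to_ratf q" using hM by auto
  have "to_ratf (\<Sum>j<n. M $$ (r,j) * u j) = (\<Sum>j<n. to_ratf (M $$ (r,j)) * (to_ratf d * h $ j))"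
    by (simp add: tr.hom_sum tr.hom_mult u)
  also have "\<dots> = to_ratf d * (ratmat M *\<^sub>v h) $ r"
    unfolding ratmat_mult_vec_index[OF M h r] by (simp add: sum_distrib_left algebra_simps)
  also have "\<dots> = to_ratf (d * q)" by (simp add: q tr.hom_mult)
  finally have Mu: "(\<Sum>j<n. M $$ (r,j) * u j) = d * q" by simp
  have "(M *\<^sub>v vec n (\<lambda>i. s * u i + (if i = i0 then t * \<pi> else 0))) $ r
     = (\<Sum>j<n. M $$ (r,j) * (s * u j + (if j = i0 then t * \<pi> else 0)))"
    using M r by (simp add: scalar_prod_def lessThan_atLeast0)
  also have "\<dots> = s * (\<Sum>j<n. M $$ (r,j) * u j) + (\<Sum>j<n. if j = i0 then M $$ (r,j) * (t * \<pi>) else 0)"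
  proof -
    have "(\<Sum>j<n. M $$ (r,j) * (s * u j + (if j = i0 then t * \<pi> else 0)))
      = (\<Sum>j<n. s * (M $$ (r,j) * u j) + (if j = i0 then M $$ (r,j) * (t * \<pi>) else 0))"
      by (rule sum.cong, auto simp: algebra_simps)
    also have "\<dots> = s * (\<Sum>j<n. M $$ (r,j) * u j) + (\<Sum>j<n. if j = i0 then M $$ (r,j) * (t * \<pi>) else 0)"
      by (simp add: sum.distrib sum_distrib_left)
    finally show ?thesis .
  qed
  also have "\<dots> = s * (d * q) + M $$ (r,i0) * (t * \<pi>)" using i0 by (simp add: Mu)
  finally show ?thesis using pd by (simp add: dvd_mult2 dvd_mult dvd_add)
qed

lemma coprime_poly_aux:
  fixes A C :: "'a::field poly mat"
  assumes A: "A \<in> carrier_mat n n" and C: "C \<in> carrier_mat p n" and cop: "right_coprime A C"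
    and h: "h \<in> carrier_vec n"
    and hA: "\<And>i. i < n \<Longrightarrow> (ratmat A *\<^sub>v h) $ i \<in> range to_ratf"
    and hC: "\<And>i. i < p \<Longrightarrow> (ratmat C *\<^sub>v h) $ i \<in> range to_ratf"
  shows "d \<noteq> 0 \<Longrightarrow> (\<And>i. i < n \<Longrightarrow> to_ratf d * h $ i \<in> range to_ratf) \<Longrightarrow> i < n \<Longrightarrow> h $ i \<in> range to_ratf"
proof (induct "degree d" arbitrary: d i rule: less_induct)
  case (less d i)
  show ?case
  proof (cases "degree d = 0")
    case True
    hence "is_unit d" using less(2) by (simp add: is_unit_iff_degree)
    then obtain e where e: "1 = d * e" by (auto elim: dvdE)
    obtain q where q: "to_ratf d * h $ i = to_ratf q" using less(3)[OF less(4)] by auto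
    have "h $ i = to_ratf e * (to_ratf d * h $ i)"
      using arg_cong[OF e, of to_ratf] by (simp add: tr.hom_mult algebra_simps)
    also have "\<dots> = to_ratf (e * q)" by (simp add: q tr.hom_mult)
    finally show ?thesis by simp
  next
    case False
    then obtain \<pi> where pd: "\<pi> dvd d" and pdeg: "degree \<pi> > 0"
      and bez: "\<And>u. \<not> \<pi> dvd u \<Longrightarrow> \<exists>s t. s * u + t * \<pi> = 1"
      using irred_factor[OF less(2)] by auto
    have p0: "\<pi> \<noteq> 0" using pdeg by auto
    from pd obtain e where de: "d = \<pi> * e" by (auto elim: dvdE)
    have e0: "e \<noteq> 0" using less(2) de by auto
    have edeg: "degree e < degree d" using de p0 e0 pdeg by (simp add: degree_mult_eq)
    define u where "u j = (SOME q. to_ratf d * h $ j = to_ratf q)" for j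
    have u: "to_ratf (u j) = to_ratf d * h $ j" if "j < n" for j
    proof -
      from less(3)[OF that] obtain q where "to_ratf d * h $ j = to_ratf q" by auto
      hence "to_ratf d * h $ j = to_ratf (u j)" unfolding u_def by (rule someI)
      thus ?thesis by simp
    qed
    show ?thesis
    proof (cases "\<forall>j<n. \<pi> dvd u j")
      case True
      have "to_ratf e * h $ j \<in> range to_ratf" if j: "j < n" for j
      proof -
        from True j obtain v where v: "u j = \<pi> * v" by (auto elim: dvdE)
        have "to_ratf \<pi> * (to_ratf e * h $ j) = to_ratf \<pi> * to_ratf v"
          using u[OF j] unfolding v de by (simp add: tr.hom_mult algebra_simps, metis)
        hence "to_ratf e * h $ j = to_ratf v" using p0 by (metis mult_cancel_left tr.hom_0_iff)
        thus ?thesis by simp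
      qed
      from less(1)[OF edeg e0 this less(4)] show ?thesis by simp
    next
      case False
      then obtain i0 where i0: "i0 < n" and nd: "\<not> \<pi> dvd u i0" by auto
      from bez[OF nd] obtain s t where st: "s * u i0 + t * \<pi> = 1" by auto
      define w where "w = vec n (\<lambda>i. s * u i + (if i = i0 then t * \<pi> else 0))"
      have w: "w \<in> carrier_vec n" unfolding w_def by simp
      have w1: "w $ i0 = 1" using i0 st by (simp add: w_def)
      have dA: "\<pi> dvd (A *\<^sub>v w) $ r" if "r < n" for r
        unfolding w_def by (rule dvd_Mw[OF A h that i0 pd u hA[OF that]])
      have dC: "\<pi> dvd (C *\<^sub>v w) $ r" if "r < p" for r
        unfolding w_def by (rule dvd_Mw[OF C h that i0 pd u hC[OF that]])
      obtain X where X: "X \<in> carrier_mat n n" and AX: "A = X * Rm n i0 w \<pi>"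
        using factor_Rm[OF A i0 w w1 p0 dA] by auto
      obtain Y where Y: "Y \<in> carrier_mat p n" and CY: "C = Y * Rm n i0 w \<pi>"
        using factor_Rm[OF C i0 w w1 p0 dC] by auto
      have "unimodular (Rm n i0 w \<pi>)"
        using cop[unfolded right_coprime_def, rule_format, of "Rm n i0 w \<pi>" X Y]
        using A C X Y AX CY Rm_carrier[of n i0 w \<pi>] by auto
      hence "is_unit \<pi>" unfolding unimodular_def det_Rm[OF i0] by simp
      hence "degree \<pi> = 0" using p0 by (simp add: is_unit_iff_degree)
      with pdeg show ?thesis by simp
    qed
  qed
qed

lemma coprime_poly:
  fixes A C :: "'a::field poly mat"
  assumes A: "A \<in> carrier_mat n n" and C: "C \<in> carrier_mat p n" and cop: "right_coprime A C"
    and h: "h \<in> carrier_vec n"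
    and hA: "\<And>i. i < n \<Longrightarrow> (ratmat A *\<^sub>v h) $ i \<in> range to_ratf"
    and hC: "\<And>i. i < p \<Longrightarrow> (ratmat C *\<^sub>v h) $ i \<in> range to_ratf"
    and i: "i < n"
  shows "h $ i \<in> range to_ratf"
proof -
  have "\<forall>j. \<exists>a b. b \<noteq> 0 \<and> h $ j = Fract a b"
  proof
    fix j show "\<exists>a b. b \<noteq> 0 \<and> h $ j = Fract a b" by (cases "h $ j", auto)
  qed
  then obtain a b where ab: "\<And>j. b j \<noteq> 0 \<and> h $ j = Fract (a j) (b j)" by metis
  define d where "d = (\<Prod>j<n. b j)"
  have d0: "d \<noteq> 0" unfolding d_def using ab by auto
  have dh: "to_ratf d * h $ j \<in> range to_ratf" if j: "j < n" for j
  proof -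
    have "d = b j * (\<Prod>j'\<in>{..<n} - {j}. b j')" unfolding d_def
      using prod.remove[of "{..<n}" j b] j by simp
    hence "to_ratf d * h $ j = Fract (b j * ((\<Prod>j'\<in>{..<n} - {j}. b j') * a j)) (b j * 1)"
      using ab[of j] by (simp add: to_ratf_def algebra_simps)
    also have "\<dots> = to_ratf ((\<Prod>j'\<in>{..<n} - {j}. b j') * a j)"
      unfolding to_ratf_def by (rule mult_fract_cancel, use ab in auto)
    finally show ?thesis by simp
  qed
  show ?thesis by (rule coprime_poly_aux[OF A C cop h hA hC d0 dh i])
qed



lemma mv_neg: "A \<in> carrier_mat a b \<Longrightarrow> v \<in> carrier_vec b \<Longrightarrow> A *\<^sub>v (- v) = - (A *\<^sub>v (v :: 'x :: ring vec))"
  by (intro eq_vecI, auto)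

lemma zero_append: "0\<^sub>v n @\<^sub>v 0\<^sub>v m = (0\<^sub>v (n + m) :: 'x :: zero vec)"
  by (intro eq_vecI, auto)

lemma mv_unit: "A \<in> carrier_mat a l \<Longrightarrow> j < l \<Longrightarrow> A *\<^sub>v unit_vec l j = col (A :: 'x :: semiring_1 mat) j"
  by (intro eq_vecI, auto)

lemma mat_eq_vec: assumes X: "X \<in> carrier_mat a l" and Y: "Y \<in> carrier_mat a l"
  and eq: "\<And>c. c \<in> carrier_vec l \<Longrightarrow> X *\<^sub>v c = Y *\<^sub>v c"
  shows "X = (Y :: 'x :: semiring_1 mat)"
proof (rule mat_col_eqI)
  fix j assume "j < dim_col Y"
  hence j: "j < l" using Y by auto
  show "col X j = col Y j" using eq[of "unit_vec l j"] mv_unit[OF X j] mv_unit[OF Y j] by simp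
qed (use X Y in auto)

lemma ratmat_mult: "A \<in> carrier_mat a b \<Longrightarrow> B \<in> carrier_mat b c \<Longrightarrow> ratmat (A * B) = ratmat A * ratmat B"
  unfolding ratmat_def by (rule tr.mat_hom_mult)

lemma ratmat_mult_vec: "A \<in> carrier_mat a b \<Longrightarrow> v \<in> carrier_vec b \<Longrightarrow> ratmat A *\<^sub>v map_vec to_ratf v = map_vec to_ratf (A *\<^sub>v v)"
  unfolding ratmat_def by (rule tr.mult_mat_vec_hom[symmetric])

lemma ratmat_uminus: "ratmat (- A) = - ratmat A"
  unfolding ratmat_def by (intro eq_matI, auto simp: tr.hom_uminus)

lemma ratmat_transpose: "ratmat (transpose_mat A) = transpose_mat (ratmat A)"
  unfolding ratmat_def by (rule map_mat_transpose[symmetric])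

lemma ratmat_append_rows: "K1 \<in> carrier_mat a l \<Longrightarrow> K2 \<in> carrier_mat b l \<Longrightarrow> ratmat (K1 @\<^sub>r K2) = ratmat K1 @\<^sub>r ratmat K2"
  unfolding ratmat_def append_rows_def by (intro eq_matI, auto)

lemma ratmat_col: "j < dim_col M \<Longrightarrow> col (ratmat M) j = map_vec to_ratf (col M j)"
  unfolding ratmat_def by auto

lemma ratmat_system: assumes "A \<in> carrier_mat n n" "B \<in> carrier_mat n m" "C \<in> carrier_mat p n" "D \<in> carrier_mat p m"
  shows "ratmat (system_matrix A B C D) = four_block_mat (ratmat A) (ratmat B) (- ratmat C) (ratmat D)"
  unfolding system_matrix_def ratmat_def using assms by (intro eq_matI, auto simp: tr.hom_uminus)

lemma mat_inv_props: fixes M :: "'a :: field ratf mat"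
  assumes M: "M \<in> carrier_mat n n" and d: "det M \<noteq> 0"
  shows "mat_inv M \<in> carrier_mat n n" "M * mat_inv M = 1\<^sub>m n" "mat_inv M * M = 1\<^sub>m n"
proof -
  from det_non_zero_imp_unit[OF M d, of undefined]
  obtain X where X: "X \<in> carrier_mat n n" "X * M = 1\<^sub>m n" "M * X = 1\<^sub>m n"
    unfolding Units_def ring_mat_def by auto
  have ex: "\<exists>X. X \<in> carrier_mat (dim_row M) (dim_row M) \<and> inverts_mat M X \<and> inverts_mat X M"
    using X M unfolding inverts_mat_def by auto
  have "mat_inv M \<in> carrier_mat (dim_row M) (dim_row M) \<and> inverts_mat M (mat_inv M) \<and> inverts_mat (mat_inv M) M"
    unfolding mat_inv_def by (rule someI_ex[OF ex])
  thus "mat_inv M \<in> carrier_mat n n" "M * mat_inv M = 1\<^sub>m n" "mat_inv M * M = 1\<^sub>m n"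
    using M unfolding inverts_mat_def by auto
qed

lemma unrat_mat: assumes Q: "Q \<in> carrier_mat a l" and pol: "\<And>i j. i < a \<Longrightarrow> j < l \<Longrightarrow> Q $$ (i,j) \<in> range to_ratf"
  shows "\<exists>K \<in> carrier_mat a l. ratmat K = Q"
proof -
  define K where "K = mat a l (\<lambda>(i,j). inv_into UNIV to_ratf (Q $$ (i,j)))"
  have "ratmat K = Q" unfolding K_def ratmat_def
    by (rule eq_matI, use Q pol in \<open>auto simp: f_inv_into_f\<close>)
  moreover have "K \<in> carrier_mat a l" unfolding K_def by auto
  ultimately show ?thesis by blast
qed

lemma stack_dims[simp]: "K1 \<in> carrier_mat n l \<Longrightarrow> K2 \<in> carrier_mat m l \<Longrightarrow> dim_row (K1 @\<^sub>r K2) = n + m"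
  "K1 \<in> carrier_mat n l \<Longrightarrow> K2 \<in> carrier_mat m l \<Longrightarrow> dim_col (K1 @\<^sub>r K2) = l"
  by (metis carrier_append_rows carrier_matD)+

lemma vdegree_col_stack_ge:
  assumes K1: "K1 \<in> carrier_mat n l" and K2: "K2 \<in> carrier_mat m l" and j: "j < l"
  shows "vdegree (col K2 j) \<le> vdegree (col (K1 @\<^sub>r K2) j)"
  unfolding vdegree_le_iff
proof (intro allI impI)
  fix i assume i: "i < dim_vec (col K2 j)"
  have "degree (col K2 j $ i) = degree (col (K1 @\<^sub>r K2) j $ (n + i))"
    using K1 K2 i j by (auto simp: append_rows_def)
  also have "\<dots> \<le> vdegree (col (K1 @\<^sub>r K2) j)" by (rule degree_le_vdegree, use K1 K2 i j in auto)
  finally show "degree (col K2 j $ i) \<le> vdegree (col (K1 @\<^sub>r K2) j)" .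
qed

lemma vdegree_col_stack_le:
  assumes K1: "K1 \<in> carrier_mat n l" and K2: "K2 \<in> carrier_mat m l" and j: "j < l"
    and N: "N \<in> carrier_mat n m" and pN: "proper_mat N" and eq: "ratmat K1 = - (N * ratmat K2)"
  shows "vdegree (col (K1 @\<^sub>r K2) j) \<le> vdegree (col K2 j)"
  unfolding vdegree_le_iff
proof (intro allI impI)
  fix i assume "i < dim_vec (col (K1 @\<^sub>r K2) j)"
  hence i: "i < n + m" using K1 K2 by auto
  let ?V = "vdegree (col K2 j)"
  show "degree (col (K1 @\<^sub>r K2) j $ i) \<le> ?V"
  proof (cases "i < n")
    case True
    have "to_ratf (K1 $$ (i,j)) = ratmat K1 $$ (i,j)" using K1 True j by simp
    also have "\<dots> = - (\<Sum>k<m. N $$ (i,k) * to_ratf (K2 $$ (k,j)))"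
      unfolding eq using N K2 True j by (simp add: scalar_prod_def lessThan_atLeast0)
    finally have e: "to_ratf (K1 $$ (i,j)) = - (\<Sum>k<m. N $$ (i,k) * to_ratf (K2 $$ (k,j)))" .
    have "dle (to_ratf (K1 $$ (i,j))) ?V" unfolding e
    proof (intro dle_uminus dle_sum dle_mult)
      fix k assume k: "k \<in> {..<m}"
      show "dle (N $$ (i,k)) 0" using pN N True k unfolding proper_mat_def by (auto intro: proper_dle)
      have "degree (col K2 j $ k) \<le> ?V" by (rule degree_le_vdegree, use K2 k in auto)
      thus "dle (to_ratf (K2 $$ (k,j))) ?V" using K2 k j by (auto intro: dle_poly)
    qed
    hence "degree (K1 $$ (i,j)) \<le> ?V" by (rule dle_poly_rev)
    thus ?thesis using True K1 K2 j by (auto simp: append_rows_def)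
  next
    case False
    have "degree (col K2 j $ (i - n)) \<le> ?V" by (rule degree_le_vdegree, use K2 False i in auto)
    thus ?thesis using False K1 K2 j i by (auto simp: append_rows_def)
  qed
qed

lemma order_as_sum: "order M = (\<Sum>j<dim_col M. vdegree (col M j))"
  unfolding order_def cols_def by (simp add: sum_list_sum_nth lessThan_atLeast0)

lemma order_stack_ge:
  assumes K1: "K1 \<in> carrier_mat n l" and K2: "K2 \<in> carrier_mat m l"
  shows "order K2 \<le> order (K1 @\<^sub>r K2)"
  unfolding order_as_sum using K1 K2 vdegree_col_stack_ge[OF K1 K2]
  by (auto intro!: sum_mono)

lemma stack_degrees:
  assumes K1: "K1 \<in> carrier_mat n l" and K2: "K2 \<in> carrier_mat m l"
    and N: "N \<in> carrier_mat n m" and pN: "proper_mat N" and eq: "ratmat K1 = - (N * ratmat K2)"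
  shows "order (K1 @\<^sub>r K2) = order K2" "col_degrees (K1 @\<^sub>r K2) = col_degrees K2"
proof -
  have "map vdegree (cols (K1 @\<^sub>r K2)) = map vdegree (cols K2)"
    unfolding cols_def using K1 K2
    by (auto intro!: antisym vdegree_col_stack_ge vdegree_col_stack_le[OF _ _ _ N pN eq])
  thus "order (K1 @\<^sub>r K2) = order K2" "col_degrees (K1 @\<^sub>r K2) = col_degrees K2"
    unfolding order_def col_degrees_def by auto
qed



lemma add_zero_neg: "u \<in> carrier_vec n \<Longrightarrow> v \<in> carrier_vec n \<Longrightarrow> (u + v = 0\<^sub>v n) \<longleftrightarrow> u = - (v :: 'x :: ab_group_add vec)"
  by (auto simp: vec_eq_iff eq_neg_iff_add_eq_0)

locale rsys =
  fixes n m p :: nat and A B C D :: "'a::field poly mat"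
  assumes A: "A \<in> carrier_mat n n" and B: "B \<in> carrier_mat n m"
    and C: "C \<in> carrier_mat p n" and D: "D \<in> carrier_mat p m" and detA: "det A \<noteq> 0"
begin

definition "Ai = mat_inv (ratmat A)"
definition "N = Ai * ratmat B"
definition "Gm = ratmat D + ratmat C * Ai * ratmat B"
definition "Pm = ratmat (system_matrix A B C D)"

lemma rA: "ratmat A \<in> carrier_mat n n" using A by simp
lemma rB: "ratmat B \<in> carrier_mat n m" using B by simp
lemma rC: "ratmat C \<in> carrier_mat p n" using C by simp
lemma rD: "ratmat D \<in> carrier_mat p m" using D by simp

lemma det_rA: "det (ratmat A) \<noteq> 0"
  using detA unfolding ratmat_def tr.hom_det by simp

lemma Ai: "Ai \<in> carrier_mat n n" "ratmat A * Ai = 1\<^sub>m n" "Ai * ratmat A = 1\<^sub>m n"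
  unfolding Ai_def using mat_inv_props[OF rA det_rA] by auto

lemma N: "N \<in> carrier_mat n m" unfolding N_def using Ai rB by auto
lemma Gm: "Gm \<in> carrier_mat p m" unfolding Gm_def using Ai rB rC rD by auto
lemma Pm_eq: "Pm = four_block_mat (ratmat A) (ratmat B) (- ratmat C) (ratmat D)"
  unfolding Pm_def by (rule ratmat_system[OF A B C D])
lemma Pm: "Pm \<in> carrier_mat (n + p) (n + m)" unfolding Pm_eq using rA rB rC rD by auto

lemma N_mv: "x \<in> carrier_vec m \<Longrightarrow> N *\<^sub>v x = Ai *\<^sub>v (ratmat B *\<^sub>v x)"
  unfolding N_def using Ai rB by simp

lemma Gm_mv: assumes x: "x \<in> carrier_vec m" shows "Gm *\<^sub>v x = ratmat D *\<^sub>v x + ratmat C *\<^sub>v (N *\<^sub>v x)"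
proof -
  have "Gm *\<^sub>v x = ratmat D *\<^sub>v x + (ratmat C * Ai * ratmat B) *\<^sub>v x"
    unfolding Gm_def by (rule add_mult_distrib_mat_vec[OF rD _ x], use rC Ai rB in auto)
  also have "(ratmat C * Ai * ratmat B) *\<^sub>v x = (ratmat C * Ai) *\<^sub>v (ratmat B *\<^sub>v x)"
    by (rule assoc_mult_mat_vec, use rC Ai rB x in auto)
  also have "\<dots> = ratmat C *\<^sub>v (Ai *\<^sub>v (ratmat B *\<^sub>v x))"
    by (rule assoc_mult_mat_vec, use rC Ai rB x in auto)
  also have "\<dots> = ratmat C *\<^sub>v (N *\<^sub>v x)" by (simp add: N_mv x)
  finally show ?thesis .
qed

lemma null_iff: assumes x1: "x1 \<in> carrier_vec n" and x2: "x2 \<in> carrier_vec m"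
  shows "Pm *\<^sub>v (x1 @\<^sub>v x2) = 0\<^sub>v (n + p) \<longleftrightarrow> x1 = - (N *\<^sub>v x2) \<and> Gm *\<^sub>v x2 = 0\<^sub>v p"
proof -
  have Nx: "N *\<^sub>v x2 \<in> carrier_vec n" using N x2 by auto
  have Bx: "ratmat B *\<^sub>v x2 \<in> carrier_vec n" using rB x2 by auto
  have e1: "ratmat A *\<^sub>v x1 + ratmat B *\<^sub>v x2 = 0\<^sub>v n \<longleftrightarrow> x1 = - (N *\<^sub>v x2)"
  proof
    assume "ratmat A *\<^sub>v x1 + ratmat B *\<^sub>v x2 = 0\<^sub>v n"
    hence "ratmat A *\<^sub>v x1 = - (ratmat B *\<^sub>v x2)" using rA x1 Bx by (subst (asm) add_zero_neg, auto)
    hence "Ai *\<^sub>v (ratmat A *\<^sub>v x1) = Ai *\<^sub>v (- (ratmat B *\<^sub>v x2))" by simp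
    also have "Ai *\<^sub>v (ratmat A *\<^sub>v x1) = x1" using Ai rA x1 by (simp flip: assoc_mult_mat_vec)
    also have "Ai *\<^sub>v (- (ratmat B *\<^sub>v x2)) = - (N *\<^sub>v x2)" using Ai Bx x2 by (simp add: mv_neg N_mv)
    finally show "x1 = - (N *\<^sub>v x2)" .
  next
    assume e: "x1 = - (N *\<^sub>v x2)"
    have "ratmat A *\<^sub>v x1 = - (ratmat A *\<^sub>v (Ai *\<^sub>v (ratmat B *\<^sub>v x2)))"
      unfolding e using rA Nx x2 by (simp add: mv_neg N_mv)
    also have "ratmat A *\<^sub>v (Ai *\<^sub>v (ratmat B *\<^sub>v x2)) = ratmat B *\<^sub>v x2"
      using Ai rA Bx by (simp flip: assoc_mult_mat_vec)
    finally show "ratmat A *\<^sub>v x1 + ratmat B *\<^sub>v x2 = 0\<^sub>v n" using rA x1 Bx by (subst add_zero_neg, auto)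
  qed
  have e2: "(- ratmat C) *\<^sub>v x1 + ratmat D *\<^sub>v x2 = Gm *\<^sub>v x2" if e: "x1 = - (N *\<^sub>v x2)"
  proof -
    have "(- ratmat C) *\<^sub>v x1 = ratmat C *\<^sub>v (N *\<^sub>v x2)"
    proof -
      have dv: "dim_vec (N *\<^sub>v x2) = dim_col (ratmat C)" using rC N by auto
      show ?thesis
        unfolding e using rC Nx uminus_mult_mat_vec[OF dv] mv_neg[of "- ratmat C" p n "N *\<^sub>v x2"] by simp
    qed
    moreover have "ratmat C *\<^sub>v (N *\<^sub>v x2) \<in> carrier_vec p" "ratmat D *\<^sub>v x2 \<in> carrier_vec p" using rC rD Nx x2 by auto
    ultimately show ?thesis unfolding Gm_mv[OF x2] by (metis comm_add_vec)
  qed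
  have PE: "Pm *\<^sub>v (x1 @\<^sub>v x2) = (ratmat A *\<^sub>v x1 + ratmat B *\<^sub>v x2) @\<^sub>v ((- ratmat C) *\<^sub>v x1 + ratmat D *\<^sub>v x2)"
    unfolding Pm_eq by (rule four_block_mat_mult_vec[OF rA rB _ rD x1 x2], use rC in auto)
  have ZE: "0\<^sub>v (n + p) = 0\<^sub>v n @\<^sub>v (0\<^sub>v p :: 'a ratf vec)" by (simp add: zero_append)
  have "Pm *\<^sub>v (x1 @\<^sub>v x2) = 0\<^sub>v (n + p) \<longleftrightarrow>
      ratmat A *\<^sub>v x1 + ratmat B *\<^sub>v x2 = 0\<^sub>v n \<and> (- ratmat C) *\<^sub>v x1 + ratmat D *\<^sub>v x2 = 0\<^sub>v p"
  proof -
    have cv: "ratmat A *\<^sub>v x1 + ratmat B *\<^sub>v x2 \<in> carrier_vec n" using rA rB x1 x2 by auto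
    show ?thesis unfolding PE ZE using append_vec_eq[OF cv zero_carrier_vec] by simp
  qed
  thus ?thesis using e1 e2 by auto
qed

end


context rsys begin

lemma rnull_P: "right_null Pm = {x \<in> carrier_vec (n + m). Pm *\<^sub>v x = 0\<^sub>v (n + p)}"
  unfolding right_null_def using Pm by auto
lemma rnull_G: "right_null Gm = {x \<in> carrier_vec m. Gm *\<^sub>v x = 0\<^sub>v p}"
  unfolding right_null_def using Gm by auto

lemma negN_mv: assumes K2: "K2 \<in> carrier_mat m l" and c: "c \<in> carrier_vec l"
  shows "(- (N * ratmat K2)) *\<^sub>v c = - (N *\<^sub>v (ratmat K2 *\<^sub>v c))"
proof -
  have "(- (N * ratmat K2)) *\<^sub>v c = - ((N * ratmat K2) *\<^sub>v c)"
    by (rule uminus_mult_mat_vec, use N K2 c in auto)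
  also have "(N * ratmat K2) *\<^sub>v c = N *\<^sub>v (ratmat K2 *\<^sub>v c)"
    by (rule assoc_mult_mat_vec, use N K2 c in auto)
  finally show ?thesis .
qed

lemma SK: assumes K1: "K1 \<in> carrier_mat n l" and K2: "K2 \<in> carrier_mat m l" and c: "c \<in> carrier_vec l"
  shows "ratmat (K1 @\<^sub>r K2) *\<^sub>v c = (ratmat K1 *\<^sub>v c) @\<^sub>v (ratmat K2 *\<^sub>v c)"
  unfolding ratmat_append_rows[OF K1 K2] by (rule mat_mult_append, use K1 K2 c in auto)

lemma stack_basis_iff:
  assumes K1: "K1 \<in> carrier_mat n l" and K2: "K2 \<in> carrier_mat m l"
  shows "poly_basis (n + m) (right_null Pm) (K1 @\<^sub>r K2) \<longleftrightarrow>
         ratmat K1 = - (N * ratmat K2) \<and> poly_basis m (right_null Gm) K2"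
proof
  assume pb: "poly_basis (n + m) (right_null Pm) (K1 @\<^sub>r K2)"
  have dc: "dim_col (K1 @\<^sub>r K2) = l" "dim_col K2 = l" using K1 K2 by auto
  have indep: "\<And>c. c \<in> carrier_vec l \<Longrightarrow> ratmat (K1 @\<^sub>r K2) *\<^sub>v c = 0\<^sub>v (n + m) \<Longrightarrow> c = 0\<^sub>v l"
    and span: "right_null Pm = {ratmat (K1 @\<^sub>r K2) *\<^sub>v c | c. c \<in> carrier_vec l}"
    using pb unfolding poly_basis_def dc by auto
  have rK1c: "ratmat K1 *\<^sub>v c \<in> carrier_vec n" for c using K1 unfolding carrier_vec_def carrier_mat_def by simp
  have rK2c: "ratmat K2 *\<^sub>v c \<in> carrier_vec m" for c using K2 unfolding carrier_vec_def carrier_mat_def by simp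
  have inN: "ratmat K1 *\<^sub>v c = - (N *\<^sub>v (ratmat K2 *\<^sub>v c)) \<and> Gm *\<^sub>v (ratmat K2 *\<^sub>v c) = 0\<^sub>v p"
    if c: "c \<in> carrier_vec l" for c
  proof -
    have "ratmat (K1 @\<^sub>r K2) *\<^sub>v c \<in> right_null Pm" unfolding span using c by auto
    hence "Pm *\<^sub>v ((ratmat K1 *\<^sub>v c) @\<^sub>v (ratmat K2 *\<^sub>v c)) = 0\<^sub>v (n + p)"
      unfolding rnull_P SK[OF K1 K2 c] by auto
    thus ?thesis using null_iff[OF rK1c rK2c] by auto
  qed
  have eq: "ratmat K1 = - (N * ratmat K2)"
    by (rule mat_eq_vec[of _ n l], use K1 K2 N inN negN_mv[OF K2] in auto)
  have indep2: "c = 0\<^sub>v l" if c: "c \<in> carrier_vec l" and z: "ratmat K2 *\<^sub>v c = 0\<^sub>v m" for c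
  proof -
    have "ratmat K1 *\<^sub>v c = 0\<^sub>v n" using inN[OF c] z N by auto
    hence "ratmat (K1 @\<^sub>r K2) *\<^sub>v c = 0\<^sub>v (n + m)" unfolding SK[OF K1 K2 c] z by (simp add: zero_append)
    thus ?thesis by (rule indep[OF c])
  qed
  have span2: "right_null Gm = {ratmat K2 *\<^sub>v c | c. c \<in> carrier_vec l}"
  proof (intro equalityI subsetI)
    fix x assume "x \<in> right_null Gm"
    hence x: "x \<in> carrier_vec m" and gx: "Gm *\<^sub>v x = 0\<^sub>v p" unfolding rnull_G by auto
    have nx: "- (N *\<^sub>v x) \<in> carrier_vec n" using N x by auto
    have "Pm *\<^sub>v ((- (N *\<^sub>v x)) @\<^sub>v x) = 0\<^sub>v (n + p)" using null_iff[OF nx x] gx by auto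
    hence "(- (N *\<^sub>v x)) @\<^sub>v x \<in> right_null Pm" unfolding rnull_P using nx x by auto
    then obtain c where c: "c \<in> carrier_vec l" and e: "(- (N *\<^sub>v x)) @\<^sub>v x = ratmat (K1 @\<^sub>r K2) *\<^sub>v c"
      unfolding span by auto
    have "x = ratmat K2 *\<^sub>v c" using e unfolding SK[OF K1 K2 c] using append_vec_eq[OF nx rK1c] by auto
    thus "x \<in> {ratmat K2 *\<^sub>v c | c. c \<in> carrier_vec l}" using c by auto
  next
    fix x assume "x \<in> {ratmat K2 *\<^sub>v c | c. c \<in> carrier_vec l}"
    then obtain c where c: "c \<in> carrier_vec l" and x: "x = ratmat K2 *\<^sub>v c" by auto
    show "x \<in> right_null Gm" unfolding rnull_G x using inN[OF c] rK2c by auto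
  qed
  show "ratmat K1 = - (N * ratmat K2) \<and> poly_basis m (right_null Gm) K2"
    using eq indep2 span2 K2 unfolding poly_basis_def by auto
next
  assume "ratmat K1 = - (N * ratmat K2) \<and> poly_basis m (right_null Gm) K2"
  hence eq: "ratmat K1 = - (N * ratmat K2)" and pb: "poly_basis m (right_null Gm) K2" by auto
  have dc: "dim_col (K1 @\<^sub>r K2) = l" "dim_col K2 = l" "dim_row (K1 @\<^sub>r K2) = n + m" using K1 K2 by auto
  have indep: "\<And>c. c \<in> carrier_vec l \<Longrightarrow> ratmat K2 *\<^sub>v c = 0\<^sub>v m \<Longrightarrow> c = 0\<^sub>v l"
    and span: "right_null Gm = {ratmat K2 *\<^sub>v c | c. c \<in> carrier_vec l}"
    using pb unfolding poly_basis_def dc by auto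
  have rK2c: "ratmat K2 *\<^sub>v c \<in> carrier_vec m" for c using K2 unfolding carrier_vec_def carrier_mat_def by simp
  have nc: "- (N *\<^sub>v (ratmat K2 *\<^sub>v c)) \<in> carrier_vec n" for c using N unfolding carrier_vec_def carrier_mat_def by simp
  have SKe: "ratmat (K1 @\<^sub>r K2) *\<^sub>v c = (- (N *\<^sub>v (ratmat K2 *\<^sub>v c))) @\<^sub>v (ratmat K2 *\<^sub>v c)"
    if c: "c \<in> carrier_vec l" for c
    unfolding SK[OF K1 K2 c] eq negN_mv[OF K2 c] ..
  have indep1: "c = 0\<^sub>v l" if c: "c \<in> carrier_vec l" and z: "ratmat (K1 @\<^sub>r K2) *\<^sub>v c = 0\<^sub>v (n + m)" for c
  proof -
    have "(- (N *\<^sub>v (ratmat K2 *\<^sub>v c))) @\<^sub>v (ratmat K2 *\<^sub>v c) = 0\<^sub>v n @\<^sub>v 0\<^sub>v m"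
      using z unfolding SKe[OF c] zero_append .
    hence "ratmat K2 *\<^sub>v c = 0\<^sub>v m" using append_vec_eq[OF nc zero_carrier_vec] by auto
    thus ?thesis by (rule indep[OF c])
  qed
  have span1: "right_null Pm = {ratmat (K1 @\<^sub>r K2) *\<^sub>v c | c. c \<in> carrier_vec l}"
  proof (intro equalityI subsetI)
    fix x assume "x \<in> right_null Pm"
    hence x: "x \<in> carrier_vec (n + m)" and px: "Pm *\<^sub>v x = 0\<^sub>v (n + p)" unfolding rnull_P by auto
    define x1 where "x1 = vec_first x n"
    define x2 where "x2 = vec_last x m"
    have x12: "x = x1 @\<^sub>v x2" unfolding x1_def x2_def using x by simp
    have x1c: "x1 \<in> carrier_vec n" and x2c: "x2 \<in> carrier_vec m" unfolding x1_def x2_def by auto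
    have "x1 = - (N *\<^sub>v x2)" "Gm *\<^sub>v x2 = 0\<^sub>v p" using null_iff[OF x1c x2c] px x12 by auto
    moreover from this(2) have "x2 \<in> right_null Gm" unfolding rnull_G using x2c by auto
    then obtain c where c: "c \<in> carrier_vec l" and x2e: "x2 = ratmat K2 *\<^sub>v c" unfolding span by auto
    ultimately have "x = ratmat (K1 @\<^sub>r K2) *\<^sub>v c" unfolding x12 SKe[OF c] by simp
    thus "x \<in> {ratmat (K1 @\<^sub>r K2) *\<^sub>v c | c. c \<in> carrier_vec l}" using c by auto
  next
    fix x assume "x \<in> {ratmat (K1 @\<^sub>r K2) *\<^sub>v c | c. c \<in> carrier_vec l}"
    then obtain c where c: "c \<in> carrier_vec l" and x: "x = ratmat (K1 @\<^sub>r K2) *\<^sub>v c" by auto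
    have "ratmat K2 *\<^sub>v c \<in> right_null Gm" unfolding span using c by auto
    hence "Gm *\<^sub>v (ratmat K2 *\<^sub>v c) = 0\<^sub>v p" unfolding rnull_G by auto
    hence "Pm *\<^sub>v x = 0\<^sub>v (n + p)" unfolding x SKe[OF c] using null_iff[OF nc rK2c] by auto
    moreover have "x \<in> carrier_vec (n + m)" unfolding x SKe[OF c] using nc rK2c by auto
    ultimately show "x \<in> right_null Pm" unfolding rnull_P by auto
  qed
  show "poly_basis (n + m) (right_null Pm) (K1 @\<^sub>r K2)"
    unfolding poly_basis_def dc using indep1 span1 by auto
qed

end


lemma split_stack: assumes K: "K \<in> carrier_mat (n + m) l"
  shows "\<exists>K1 K2. K1 \<in> carrier_mat n l \<and> K2 \<in> carrier_mat m l \<and> K = K1 @\<^sub>r K2"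
proof -
  define K1 where "K1 = mat n l (\<lambda>(i,j). K $$ (i,j))"
  define K2 where "K2 = mat m l (\<lambda>(i,j). K $$ (n + i,j))"
  have "K = K1 @\<^sub>r K2" unfolding append_rows_def K1_def K2_def
    by (rule eq_matI, use K in auto)
  moreover have "K1 \<in> carrier_mat n l" "K2 \<in> carrier_mat m l" unfolding K1_def K2_def by auto
  ultimately show ?thesis by blast
qed

context rsys begin

lemma lift:
  assumes cop: "right_coprime A C" and K2: "K2 \<in> carrier_mat m l"
    and pb: "poly_basis m (right_null Gm) K2"
  shows "\<exists>K1 \<in> carrier_mat n l. ratmat K1 = - (N * ratmat K2)"
proof (rule unrat_mat)
  show Q: "- (N * ratmat K2) \<in> carrier_mat n l" using N K2 by auto
  fix i j assume i: "i < n" and j: "j < l"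
  define x where "x = col (ratmat K2) j"
  have xe: "x = ratmat K2 *\<^sub>v unit_vec l j" unfolding x_def by (rule mv_unit[symmetric], use K2 j in auto)
  have xm: "x = map_vec to_ratf (col K2 j)" unfolding x_def using ratmat_col[of j K2] K2 j by auto
  have xc: "x \<in> carrier_vec m" unfolding xm using K2 by auto
  have cK: "col K2 j \<in> carrier_vec m" using K2 by auto
  have span: "right_null Gm = {ratmat K2 *\<^sub>v c | c. c \<in> carrier_vec l}"
    using pb K2 unfolding poly_basis_def by auto
  have "x \<in> right_null Gm" unfolding span xe by auto
  hence gx: "Gm *\<^sub>v x = 0\<^sub>v p" unfolding rnull_G by auto
  define h where "h = - (N *\<^sub>v x)"
  have Nx: "N *\<^sub>v x \<in> carrier_vec n" using N xc by auto
  have hc: "h \<in> carrier_vec n" unfolding h_def using Nx by auto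
  have colQ: "col (- (N * ratmat K2)) j = h"
    unfolding h_def xe using negN_mv[OF K2, of "unit_vec l j"] mv_unit[OF Q j] by simp
  have Bx: "ratmat B *\<^sub>v x \<in> carrier_vec n" using rB xc by auto
  have Ah: "ratmat A *\<^sub>v h = - (ratmat B *\<^sub>v x)"
  proof -
    have "ratmat A *\<^sub>v h = - (ratmat A *\<^sub>v (Ai *\<^sub>v (ratmat B *\<^sub>v x)))"
      unfolding h_def using rA Nx xc by (simp add: mv_neg N_mv)
    also have "ratmat A *\<^sub>v (Ai *\<^sub>v (ratmat B *\<^sub>v x)) = ratmat B *\<^sub>v x"
      using Ai rA Bx by (simp flip: assoc_mult_mat_vec)
    finally show ?thesis .
  qed
  have Ch: "ratmat C *\<^sub>v h = ratmat D *\<^sub>v x"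
  proof -
    have "ratmat D *\<^sub>v x + ratmat C *\<^sub>v (N *\<^sub>v x) = 0\<^sub>v p" using gx Gm_mv[OF xc] by simp
    hence "ratmat C *\<^sub>v (N *\<^sub>v x) = - (ratmat D *\<^sub>v x)"
      using add_zero_neg[of "ratmat C *\<^sub>v (N *\<^sub>v x)" p "ratmat D *\<^sub>v x"] rC rD Nx xc
      by (metis comm_add_vec mult_mat_vec_carrier)
    thus ?thesis unfolding h_def using mv_neg[OF rC Nx] by simp
  qed
  have hA: "(ratmat A *\<^sub>v h) $ k \<in> range to_ratf" if k: "k < n" for k
  proof -
    have "(ratmat A *\<^sub>v h) $ k = - (to_ratf ((B *\<^sub>v col K2 j) $ k))"
      unfolding Ah xm ratmat_mult_vec[OF B cK] using K2 B k by auto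
    also have "\<dots> = to_ratf (- (B *\<^sub>v col K2 j) $ k)" by (simp add: tr.hom_uminus)
    finally show ?thesis by simp
  qed
  have hC: "(ratmat C *\<^sub>v h) $ k \<in> range to_ratf" if k: "k < p" for k
  proof -
    have "(ratmat C *\<^sub>v h) $ k = to_ratf ((D *\<^sub>v col K2 j) $ k)"
      unfolding Ch xm ratmat_mult_vec[OF D cK] using K2 D k by auto
    thus ?thesis by simp
  qed
  have "h $ i \<in> range to_ratf" by (rule coprime_poly[OF A C cop hc hA hC i])
  moreover have "(- (N * ratmat K2)) $$ (i,j) = h $ i"
  proof -
    have "(- (N * ratmat K2)) $$ (i,j) = col (- (N * ratmat K2)) j $ i"
      by (rule index_col[symmetric], use Q i j in auto)
    thus ?thesis unfolding colQ .
  qed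
  ultimately show "(- (N * ratmat K2)) $$ (i,j) \<in> range to_ratf" by simp
qed

end


context rsys begin

lemma dims_PG: "dim_col Pm = n + m" "dim_col Gm = m" using Pm Gm by auto

lemma right_part1:
  assumes cop: "right_coprime A C" and pr: "proper_mat N"
    and H1: "H1 \<in> carrier_mat n l" and H2: "H2 \<in> carrier_mat m l"
    and mb: "minimal_basis (n + m) (right_null Pm) (H1 @\<^sub>r H2)"
  shows "minimal_basis m (right_null Gm) H2 \<and> ratmat H1 = - (N * ratmat H2)"
proof -
  from mb have pb: "poly_basis (n + m) (right_null Pm) (H1 @\<^sub>r H2)"
    and mn: "\<And>H'. poly_basis (n + m) (right_null Pm) H' \<Longrightarrow> order (H1 @\<^sub>r H2) \<le> order H'"
    unfolding minimal_basis_def by auto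
  from pb[unfolded stack_basis_iff[OF H1 H2]]
  have eq: "ratmat H1 = - (N * ratmat H2)" and pb2: "poly_basis m (right_null Gm) H2" by auto
  have "order H2 \<le> order H'" if pb': "poly_basis m (right_null Gm) H'" for H'
  proof -
    have H': "H' \<in> carrier_mat m (dim_col H')" using pb' unfolding poly_basis_def by auto
    obtain K1 where K1: "K1 \<in> carrier_mat n (dim_col H')" and eqK: "ratmat K1 = - (N * ratmat H')"
      using lift[OF cop H' pb'] by auto
    have "poly_basis (n + m) (right_null Pm) (K1 @\<^sub>r H')"
      using stack_basis_iff[OF K1 H'] eqK pb' by auto
    hence "order (H1 @\<^sub>r H2) \<le> order (K1 @\<^sub>r H')" by (rule mn)
    also have "\<dots> = order H'" by (rule stack_degrees(1)[OF K1 H' N pr eqK])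
    finally show ?thesis using order_stack_ge[OF H1 H2] by simp
  qed
  thus ?thesis using eq pb2 unfolding minimal_basis_def by auto
qed

lemma right_part2:
  assumes cop: "right_coprime A C" and pr: "proper_mat N"
  shows "right_minimal_indices Pm = right_minimal_indices Gm"
proof -
  have "(\<exists>K. minimal_basis (n + m) (right_null Pm) K \<and> col_degrees K = M) \<longleftrightarrow>
        (\<exists>H. minimal_basis m (right_null Gm) H \<and> col_degrees H = M)" for M
  proof
    assume "\<exists>K. minimal_basis (n + m) (right_null Pm) K \<and> col_degrees K = M"
    then obtain K where mb: "minimal_basis (n + m) (right_null Pm) K" and cd: "col_degrees K = M" by auto
    have "K \<in> carrier_mat (n + m) (dim_col K)" using mb unfolding minimal_basis_def poly_basis_def by auto
    then obtain K1 K2 where K1: "K1 \<in> carrier_mat n (dim_col K)" and K2: "K2 \<in> carrier_mat m (dim_col K)"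
      and KK: "K = K1 @\<^sub>r K2" using split_stack by blast
    from right_part1[OF cop pr K1 K2 mb[unfolded KK]]
    have "minimal_basis m (right_null Gm) K2" and eq: "ratmat K1 = - (N * ratmat K2)" by auto
    moreover have "col_degrees K2 = M" using cd stack_degrees(2)[OF K1 K2 N pr eq] KK by simp
    ultimately show "\<exists>H. minimal_basis m (right_null Gm) H \<and> col_degrees H = M" by auto
  next
    assume "\<exists>H. minimal_basis m (right_null Gm) H \<and> col_degrees H = M"
    then obtain H where mb: "minimal_basis m (right_null Gm) H" and cd: "col_degrees H = M" by auto
    from mb have pb: "poly_basis m (right_null Gm) H"
      and mn: "\<And>H'. poly_basis m (right_null Gm) H' \<Longrightarrow> order H \<le> order H'"
      unfolding minimal_basis_def by auto
    have H: "H \<in> carrier_mat m (dim_col H)" using pb unfolding poly_basis_def by auto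
    obtain K1 where K1: "K1 \<in> carrier_mat n (dim_col H)" and eqK: "ratmat K1 = - (N * ratmat H)"
      using lift[OF cop H pb] by auto
    have pbK: "poly_basis (n + m) (right_null Pm) (K1 @\<^sub>r H)"
      using stack_basis_iff[OF K1 H] eqK pb by auto
    have "order (K1 @\<^sub>r H) \<le> order K'" if pb': "poly_basis (n + m) (right_null Pm) K'" for K'
    proof -
      have "K' \<in> carrier_mat (n + m) (dim_col K')" using pb' unfolding poly_basis_def by auto
      then obtain K1' K2' where K1': "K1' \<in> carrier_mat n (dim_col K')" and K2': "K2' \<in> carrier_mat m (dim_col K')"
        and KK: "K' = K1' @\<^sub>r K2'" using split_stack by blast
      have "poly_basis m (right_null Gm) K2'" using pb'[unfolded KK stack_basis_iff[OF K1' K2']] by auto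
      hence "order H \<le> order K2'" by (rule mn)
      also have "\<dots> \<le> order K'" unfolding KK by (rule order_stack_ge[OF K1' K2'])
      finally show ?thesis using stack_degrees(1)[OF K1 H N pr eqK] by simp
    qed
    hence "minimal_basis (n + m) (right_null Pm) (K1 @\<^sub>r H)" using pbK unfolding minimal_basis_def by auto
    moreover have "col_degrees (K1 @\<^sub>r H) = M" using cd stack_degrees(2)[OF K1 H N pr eqK] by simp
    ultimately show "\<exists>K. minimal_basis (n + m) (right_null Pm) K \<and> col_degrees K = M" by auto
  qed
  hence "(\<lambda>M. \<exists>K. minimal_basis (n + m) (right_null Pm) K \<and> col_degrees K = M) =
         (\<lambda>M. \<exists>H. minimal_basis m (right_null Gm) H \<and> col_degrees H = M)" by auto
  thus ?thesis unfolding right_minimal_indices_def minimal_indices_def dims_PG by simp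
qed

end


lemma mat_inv_transpose: fixes M :: "'a::field ratf mat"
  assumes M: "M \<in> carrier_mat n n" and d: "det M \<noteq> 0"
  shows "mat_inv (transpose_mat M) = transpose_mat (mat_inv M)"
proof -
  have MT: "transpose_mat M \<in> carrier_mat n n" using M by auto
  have dT: "det (transpose_mat M) \<noteq> 0" using d det_transpose[OF M] by simp
  note X = mat_inv_props[OF MT dT]
  note Y0 = mat_inv_props[OF M d]
  let ?X = "mat_inv (transpose_mat M)" and ?Y = "transpose_mat (mat_inv M)"
  have Y: "?Y \<in> carrier_mat n n" using Y0 by auto
  have MY: "transpose_mat M * ?Y = 1\<^sub>m n"
    using transpose_mult[OF Y0(1) M] Y0(3) by simp
  have "?X = ?X * (transpose_mat M * ?Y)" unfolding MY using X by simp
  also have "\<dots> = (?X * transpose_mat M) * ?Y" using X(1) MT Y by simp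
  also have "\<dots> = ?Y" unfolding X(3) using Y by simp
  finally show ?thesis .
qed

lemma right_coprime_uminus: assumes cop: "right_coprime A C" shows "right_coprime A (- C)"
  unfolding right_coprime_def
proof (intro allI impI, elim conjE)
  fix R X Y
  assume R: "R \<in> carrier_mat (dim_col A) (dim_col A)" and X: "X \<in> carrier_mat (dim_row A) (dim_col A)"
    and Y: "Y \<in> carrier_mat (dim_row (- C)) (dim_col A)" and AX: "A = X * R" and CY: "- C = Y * R"
  have dd: "dim_col Y = dim_row R" using Y R by auto
  have C1: "C = (- Y) * R" using arg_cong[OF CY, of uminus] uminus_mult_left_mat[OF dd] by simp
  have Y1: "- Y \<in> carrier_mat (dim_row C) (dim_col A)" using Y by auto
  have "unimodular R"
    by (rule cop[unfolded right_coprime_def, rule_format, of R X "- Y"], intro conjI, fact R, fact X, fact Y1, fact AX, fact C1)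
  thus "unimodular R" .
qed

lemma neg_neg_mult3: fixes X :: "'x :: ring mat"
  assumes X: "X \<in> carrier_mat a b" and Y: "Y \<in> carrier_mat b c" and Z: "Z \<in> carrier_mat c d"
  shows "(- X) * Y * (- Z) = X * Y * Z"
proof -
  have d1: "dim_col X = dim_row Y" using X Y by auto
  have d2: "dim_col (X * Y) = dim_row (- Z)" using X Y Z by auto
  have d3: "dim_col (X * Y) = dim_row Z" using X Y Z by auto
  show ?thesis unfolding uminus_mult_left_mat[OF d1] uminus_mult_left_mat[OF d2] uminus_mult_right_mat[OF d3] by simp
qed

lemma left_as_right_mb: "left_minimal_basis M H = right_minimal_basis (transpose_mat M) H"
  unfolding left_minimal_basis_def right_minimal_basis_def left_null_def right_null_def by simp

lemma left_as_right_mi: "left_minimal_indices M = right_minimal_indices (transpose_mat M)"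
  unfolding left_minimal_indices_def right_minimal_indices_def left_null_def right_null_def by simp

lemma proper_neg_transpose: "proper_mat M \<Longrightarrow> proper_mat (- transpose_mat M)"
  unfolding proper_mat_def by (auto intro: proper_uminus)

theorem theorem3p6:
  fixes A B C D :: "'a::field poly mat" and G :: "'a ratf mat"
    and n m p :: nat
  assumes psm: "is_polynomial_system_matrix n m p A B C D G"
  shows
    "(right_coprime A C \<and> proper_mat (mat_inv (ratmat A) * ratmat B) \<longrightarrow>
       (\<forall>l H1 H2. H1 \<in> carrier_mat n l \<and> H2 \<in> carrier_mat m l \<and>
          right_minimal_basis (ratmat (system_matrix A B C D)) (H1 @\<^sub>r H2) \<longrightarrow>
          right_minimal_basis G H2 \<and>
          ratmat H1 = - (mat_inv (ratmat A) * ratmat B * ratmat H2))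
       \<and> right_minimal_indices (ratmat (system_matrix A B C D)) = right_minimal_indices G)
   \<and>
    (left_coprime A B \<and> proper_mat (ratmat C * mat_inv (ratmat A)) \<longrightarrow>
       (\<forall>q H1 H2. H1 \<in> carrier_mat n q \<and> H2 \<in> carrier_mat p q \<and>
          left_minimal_basis (ratmat (system_matrix A B C D)) (H1 @\<^sub>r H2) \<longrightarrow>
          left_minimal_basis G H2 \<and>
          ratmat H1 = transpose_mat (ratmat C * mat_inv (ratmat A)) * ratmat H2)
       \<and> left_minimal_indices (ratmat (system_matrix A B C D)) = left_minimal_indices G)"
proof -
  from psm have A: "A \<in> carrier_mat n n" and B: "B \<in> carrier_mat n m" and C: "C \<in> carrier_mat p n"
    and D: "D \<in> carrier_mat p m" and dA: "det A \<noteq> 0"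
    and Geq: "G = ratmat D + ratmat C * mat_inv (ratmat A) * ratmat B"
    unfolding is_polynomial_system_matrix_def by auto
  interpret r: rsys n m p A B C D using A B C D dA by unfold_locales
  have GG: "G = r.Gm" unfolding r.Gm_def r.Ai_def Geq ..
  have NN: "mat_inv (ratmat A) * ratmat B = r.N" unfolding r.N_def r.Ai_def ..
  have PP: "ratmat (system_matrix A B C D) = r.Pm" unfolding r.Pm_def ..
  have right: "right_coprime A C \<and> proper_mat (mat_inv (ratmat A) * ratmat B) \<longrightarrow>
       (\<forall>l H1 H2. H1 \<in> carrier_mat n l \<and> H2 \<in> carrier_mat m l \<and>
          right_minimal_basis (ratmat (system_matrix A B C D)) (H1 @\<^sub>r H2) \<longrightarrow>
          right_minimal_basis G H2 \<and>
          ratmat H1 = - (mat_inv (ratmat A) * ratmat B * ratmat H2))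
       \<and> right_minimal_indices (ratmat (system_matrix A B C D)) = right_minimal_indices G"
  proof (intro impI conjI)
    assume a: "right_coprime A C \<and> proper_mat (mat_inv (ratmat A) * ratmat B)"
    hence cop: "right_coprime A C" and pr: "proper_mat r.N" using NN by auto
    show "right_minimal_indices (ratmat (system_matrix A B C D)) = right_minimal_indices G"
      unfolding PP GG by (rule r.right_part2[OF cop pr])
    show "\<forall>l H1 H2. H1 \<in> carrier_mat n l \<and> H2 \<in> carrier_mat m l \<and>
          right_minimal_basis (ratmat (system_matrix A B C D)) (H1 @\<^sub>r H2) \<longrightarrow>
          right_minimal_basis G H2 \<and>
          ratmat H1 = - (mat_inv (ratmat A) * ratmat B * ratmat H2)"
      using r.right_part1[OF cop pr] unfolding PP GG NN right_minimal_basis_def r.dims_PG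
      by auto
  qed
  define At where "At = transpose_mat A"
  define Bt where "Bt = - transpose_mat C"
  define Ct where "Ct = - transpose_mat B"
  define Dt where "Dt = transpose_mat D"
  have At: "At \<in> carrier_mat n n" and Bt: "Bt \<in> carrier_mat n p" and Ct: "Ct \<in> carrier_mat m n"
    and Dt: "Dt \<in> carrier_mat m p" unfolding At_def Bt_def Ct_def Dt_def using A B C D by auto
  have dAt: "det At \<noteq> 0" unfolding At_def using dA det_transpose[OF A] by simp
  interpret l: rsys n p m At Bt Ct Dt using At Bt Ct Dt dAt by unfold_locales
  have AiT: "l.Ai = transpose_mat r.Ai"
    unfolding l.Ai_def r.Ai_def unfolding At_def ratmat_transpose by (rule mat_inv_transpose[OF r.rA r.det_rA])
  have LN: "l.N = - transpose_mat (ratmat C * mat_inv (ratmat A))"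
  proof -
    have "l.N = transpose_mat r.Ai * (- transpose_mat (ratmat C))"
      unfolding l.N_def unfolding AiT unfolding Bt_def ratmat_uminus ratmat_transpose ..
    also have "\<dots> = - (transpose_mat r.Ai * transpose_mat (ratmat C))"
      by (rule uminus_mult_right_mat, use r.Ai(1) r.rC in auto)
    also have "transpose_mat r.Ai * transpose_mat (ratmat C) = transpose_mat (ratmat C * r.Ai)"
      by (rule transpose_mult[symmetric, OF r.rC r.Ai(1)])
    finally show ?thesis unfolding r.Ai_def .
  qed
  have LG: "l.Gm = transpose_mat G"
  proof -
    have "l.Gm = transpose_mat (ratmat D) + transpose_mat (ratmat B) * transpose_mat r.Ai * transpose_mat (ratmat C)"
      unfolding l.Gm_def unfolding AiT unfolding Bt_def Ct_def Dt_def ratmat_uminus ratmat_transpose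
      by (subst neg_neg_mult3[of _ m n _ n _ p], use r.rB r.Ai(1) r.rC in auto)
    also have "transpose_mat (ratmat B) * transpose_mat r.Ai * transpose_mat (ratmat C)
       = transpose_mat (ratmat B) * (transpose_mat r.Ai * transpose_mat (ratmat C))"
      by (rule assoc_mult_mat, use r.rB r.Ai(1) r.rC in auto)
    also have "transpose_mat r.Ai * transpose_mat (ratmat C) = transpose_mat (ratmat C * r.Ai)"
      by (rule transpose_mult[symmetric, OF r.rC r.Ai(1)])
    also have "transpose_mat (ratmat B) * transpose_mat (ratmat C * r.Ai) = transpose_mat (ratmat C * r.Ai * ratmat B)"
      by (rule transpose_mult[symmetric], use r.rC r.Ai(1) r.rB in auto)
    also have "transpose_mat (ratmat D) + \<dots> = transpose_mat (ratmat D + ratmat C * r.Ai * ratmat B)"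
      by (rule transpose_add[symmetric], use r.rC r.Ai(1) r.rB r.rD in auto)
    finally show ?thesis unfolding GG r.Gm_def .
  qed
  have LP: "l.Pm = transpose_mat (ratmat (system_matrix A B C D))"
    unfolding l.Pm_def unfolding At_def Bt_def Ct_def Dt_def ratmat_def system_matrix_def
    by (rule eq_matI, use A B C D in \<open>auto simp: tr.hom_uminus\<close>)
  have dGl: "dim_col l.Pm = n + p" "dim_col l.Gm = p" using l.dims_PG .
  have left: "left_coprime A B \<and> proper_mat (ratmat C * mat_inv (ratmat A)) \<longrightarrow>
       (\<forall>q H1 H2. H1 \<in> carrier_mat n q \<and> H2 \<in> carrier_mat p q \<and>
          left_minimal_basis (ratmat (system_matrix A B C D)) (H1 @\<^sub>r H2) \<longrightarrow>
          left_minimal_basis G H2 \<and>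
          ratmat H1 = transpose_mat (ratmat C * mat_inv (ratmat A)) * ratmat H2)
       \<and> left_minimal_indices (ratmat (system_matrix A B C D)) = left_minimal_indices G"
  proof (intro impI conjI)
    assume a: "left_coprime A B \<and> proper_mat (ratmat C * mat_inv (ratmat A))"
    hence cop: "right_coprime At Ct" unfolding left_coprime_def At_def Ct_def
      using right_coprime_uminus by blast
    have pr: "proper_mat l.N" unfolding LN using a proper_neg_transpose by blast
    show "left_minimal_indices (ratmat (system_matrix A B C D)) = left_minimal_indices G"
      unfolding left_as_right_mi LP[symmetric] LG[symmetric] by (rule l.right_part2[OF cop pr])
    show "\<forall>q H1 H2. H1 \<in> carrier_mat n q \<and> H2 \<in> carrier_mat p q \<and>
          left_minimal_basis (ratmat (system_matrix A B C D)) (H1 @\<^sub>r H2) \<longrightarrow>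
          left_minimal_basis G H2 \<and>
          ratmat H1 = transpose_mat (ratmat C * mat_inv (ratmat A)) * ratmat H2"
    proof (intro allI impI, elim conjE)
      fix q H1 H2 assume H1: "H1 \<in> carrier_mat n q" and H2: "H2 \<in> carrier_mat p q"
        and mb: "left_minimal_basis (ratmat (system_matrix A B C D)) (H1 @\<^sub>r H2)"
      have mb': "minimal_basis (n + p) (right_null l.Pm) (H1 @\<^sub>r H2)"
        using mb unfolding left_as_right_mb LP[symmetric] right_minimal_basis_def dGl .
      from l.right_part1[OF cop pr H1 H2 mb']
      have r1: "minimal_basis p (right_null l.Gm) H2" and r2: "ratmat H1 = - (l.N * ratmat H2)" by auto
      have g1: "left_minimal_basis G H2" using r1 unfolding left_as_right_mb LG[symmetric] right_minimal_basis_def dGl .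
      have XC: "transpose_mat (ratmat C * mat_inv (ratmat A)) \<in> carrier_mat n p"
        using r.rC r.Ai(1) unfolding r.Ai_def by auto
      have dd: "dim_col (transpose_mat (ratmat C * mat_inv (ratmat A))) = dim_row (ratmat H2)" using XC H2 by auto
      have "ratmat H1 = transpose_mat (ratmat C * mat_inv (ratmat A)) * ratmat H2"
        unfolding r2 LN using uminus_mult_left_mat[OF dd] by simp
      with g1 show "left_minimal_basis G H2 \<and> ratmat H1 = transpose_mat (ratmat C * mat_inv (ratmat A)) * ratmat H2" by simp
    qed
  qed
  show ?thesis using right left by blast
qed


end
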